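(* Let $\mathcal H$ be a real Hilbert space and $\hat H\colon\operatorname{dom}(\hat H)\subset\mathcal H\to\mathcal H$ a densely defined self-adjoint linear operator. Assume that $E_0:=\inf\sigma(\hat H)>-\infty$ is an eigenvalue of $\hat H$ and that $E_1:=\inf(\sigma(\hat H)\setminus\{E_0\})>E_0$. Let $V$ be the eigenspace of $E_0$ and $P_0$ the orthogonal projection onto $V$. Let $\psi_0\in\mathbb S$ with $\psi_0\notin V^\perp$, and let $\psi\colon[0,\infty)\to\mathbb S\cap\operatorname{dom}(\hat H)$ be a solution of the gradient flow \[ \psi'(t)=-2\big[\hat H\psi(t)-E(\psi(t))\psi(t)\big],\qquad \psi(0)=\psi_0, \] where the time derivative is understood classically with values in $\mathcal H$. Set $v_0:=P_0\psi_0/\|P_0\psi_0\|$ and $\alpha:=\|\psi_0-P_0\psi_0\|/\|P_0\psi_0\|$. Then for all $t\ge0$, \[ \|v_0-\psi(t)\|\le\sqrt2\,\alpha\,e^{-2(E_1-E_0)t}. \]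
   Context: $\mathbb S=\{\psi\in\mathcal H:\langle\psi,\psi\rangle=1\}$ is the unit sphere, and for $\psi\in\operatorname{dom}(\hat H)\setminus\{0\}$ the energy (Rayleigh quotient) is $E(\psi)=\langle\psi,\hat H\psi\rangle/\langle\psi,\psi\rangle$. $\sigma(\hat H)$ denotes the spectrum of $\hat H$. *)

theory Defs
  imports "HOL-Analysis.Analysis"
begin

text \<open>A (possibly unbounded) linear operator is given by a domain D and a map H,
  only the values on D being relevant.\<close>

definition lin_op_on :: "'a::real_vector set \<Rightarrow> ('a \<Rightarrow> 'a) \<Rightarrow> bool" where
  "lin_op_on D H \<longleftrightarrow> subspace D \<and>
     (\<forall>x\<in>D. \<forall>y\<in>D. H (x + y) = H x + H y) \<and>
     (\<forall>c. \<forall>x\<in>D. H (c *\<^sub>R x) = c *\<^sub>R H x)"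

definition adjoint_dom :: "'a::real_inner set \<Rightarrow> ('a \<Rightarrow> 'a) \<Rightarrow> 'a set" where
  "adjoint_dom D H = {y. \<exists>z. \<forall>x\<in>D. inner (H x) y = inner x z}"

text \<open>Densely defined self-adjoint operator: H = H^*, i.e. dom H^* = D and
  H^* y = H y for y in D (adjoint value is unique by density).\<close>
definition densely_defined_self_adjoint :: "'a::real_inner set \<Rightarrow> ('a \<Rightarrow> 'a) \<Rightarrow> bool" where
  "densely_defined_self_adjoint D H \<longleftrightarrow> lin_op_on D H \<and> closure D = UNIV \<and>
     adjoint_dom D H = D \<and> (\<forall>x\<in>D. \<forall>y\<in>D. inner (H x) y = inner x (H y))"

text \<open>Spectrum: lambda is in the resolvent set iff H - lambda : D -> whole space is
  bijective with bounded inverse.\<close>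
definition op_spectrum :: "'a::real_normed_vector set \<Rightarrow> ('a \<Rightarrow> 'a) \<Rightarrow> real set" where
  "op_spectrum D H = {l. \<not> ((\<forall>y. \<exists>x\<in>D. H x - l *\<^sub>R x = y) \<and>
       (\<exists>C. \<forall>x\<in>D. norm x \<le> C * norm (H x - l *\<^sub>R x)))}"

definition eigenspace_op :: "'a::real_vector set \<Rightarrow> ('a \<Rightarrow> 'a) \<Rightarrow> real \<Rightarrow> 'a set" where
  "eigenspace_op D H l = {x\<in>D. H x = l *\<^sub>R x}"

definition orth_proj :: "'a::real_inner set \<Rightarrow> 'a \<Rightarrow> 'a" where
  "orth_proj V x = (THE p. p \<in> V \<and> (\<forall>v\<in>V. inner (x - p) v = 0))"

definition energy :: "('a::real_inner \<Rightarrow> 'a) \<Rightarrow> 'a \<Rightarrow> real" where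
  "energy H \<psi> = inner \<psi> (H \<psi>) / inner \<psi> \<psi>"

end

theory Submission
  imports Defs
begin


lemma csk:
  fixes P :: "'a::real_inner \<Rightarrow> 'a"
  assumes bl: "bounded_linear P" and sym: "\<And>y z. inner (P y) z = inner y (P z)"
    and sub: "subspace W" and inv: "\<And>y. y \<in> W \<Longrightarrow> P y \<in> W"
    and pos: "\<And>u. u \<in> W \<Longrightarrow> 0 \<le> inner (P u) u"
    and up: "\<And>u. u \<in> W \<Longrightarrow> inner (P u) u \<le> K * inner u u"
    and K: "K > 0" and y: "y \<in> W"
  shows "inner (P y) (P y) \<le> K * inner (P y) y"
proof -
  interpret bounded_linear P by fact
  define z where "z = P y"
  have zW: "z \<in> W" using inv y z_def by auto
  define t where "t = 1 / K"
  have yt: "y - t *\<^sub>R z \<in> W" using sub y zW by (simp add: subspace_diff subspace_scale)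
  have "0 \<le> inner (P (y - t *\<^sub>R z)) (y - t *\<^sub>R z)" using pos yt by blast
  also have "\<dots> = inner (P y) y - t * inner (P y) z - t * inner (P z) y + t * t * inner (P z) z"
    by (simp add: diff scaleR inner_diff_left inner_diff_right algebra_simps)
  also have "inner (P z) y = inner z z" using sym[of z y] by (simp add: z_def inner_commute)
  also have "inner (P y) z = inner z z" by (simp add: z_def)
  finally have 1: "0 \<le> inner (P y) y - 2 * t * inner z z + t * t * inner (P z) z" by simp
  have 2: "inner (P z) z \<le> K * inner z z" using up zW by blast
  have "t * t * inner (P z) z \<le> t * t * (K * inner z z)"
    using 2 by (intro mult_left_mono) auto
  also have "\<dots> = t * inner z z" using K by (simp add: t_def field_simps)
  finally have "0 \<le> inner (P y) y - t * inner z z" using 1 by simp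
  then have "t * inner z z \<le> inner (P y) y" by simp
  then have "K * (t * inner z z) \<le> K * inner (P y) y" using K by (intro mult_left_mono) auto
  then show ?thesis using K by (simp add: t_def z_def)
qed

lemma nr_step:
  fixes X :: "'a::real_inner \<Rightarrow> 'a"
  assumes bl: "bounded_linear X" and sym: "\<And>y z. inner (X y) z = inner y (X z)"
    and sub: "subspace W" and inv: "\<And>y. y \<in> W \<Longrightarrow> X y \<in> W"
    and lo: "\<And>y. y \<in> W \<Longrightarrow> m * inner y y \<le> inner (X y) y"
    and bb: "\<And>y. y \<in> W \<Longrightarrow> norm y \<le> C * norm (X y - m *\<^sub>R y)"
  shows "\<exists>\<delta>>0. \<forall>y\<in>W. (m + \<delta>) * inner y y \<le> inner (X y) y"
proof -
  define P where "P = (\<lambda>y. X y - m *\<^sub>R y)"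
  have blP: "bounded_linear P" unfolding P_def
    by (intro bounded_linear_sub bl bounded_linear_scaleR_right bounded_linear_ident)
  obtain K0 where K0: "K0 > 0" "\<And>x. norm (P x) \<le> norm x * K0"
    using bounded_linear.pos_bounded[OF blP] by blast
  have symP: "\<And>y z. inner (P y) z = inner y (P z)"
    by (simp add: P_def inner_diff_left inner_diff_right sym)
  have invP: "\<And>y. y \<in> W \<Longrightarrow> P y \<in> W"
    using inv sub by (simp add: P_def subspace_diff subspace_scale)
  have posP: "\<And>u. u \<in> W \<Longrightarrow> 0 \<le> inner (P u) u"
    using lo by (simp add: P_def inner_diff_left)
  have upP: "inner (P u) u \<le> K0 * inner u u" for u
  proof -
    have "inner (P u) u \<le> norm (P u) * norm u" by (metis inner_commute norm_cauchy_schwarz)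
    also have "\<dots> \<le> norm u * K0 * norm u" using K0(2)[of u] by (intro mult_right_mono) auto
    finally show ?thesis by (simp add: power2_eq_square[symmetric] power2_norm_eq_inner[symmetric] algebra_simps)
  qed
  have cs: "y \<in> W \<Longrightarrow> inner (P y) (P y) \<le> K0 * inner (P y) y" for y
    by (rule csk[OF blP symP sub invP posP]) (use upP K0 in auto)
  define \<delta> where "\<delta> = 1 / (C * C * K0 + 1)"
  have cck: "0 \<le> C * C * K0" using K0(1) by (metis mult_nonneg_nonneg zero_le_square less_imp_le)
  have dpos: "\<delta> > 0" unfolding \<delta>_def using cck by simp
  have "\<forall>y\<in>W. (m + \<delta>) * inner y y \<le> inner (X y) y"
  proof
    fix y assume y: "y \<in> W"
    have "norm y \<le> C * norm (P y)" using bb y by (simp add: P_def)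
    then have "norm y ^ 2 \<le> (C * norm (P y)) ^ 2" by (intro power_mono) auto
    then have "norm y ^ 2 \<le> C * C * norm (P y) ^ 2" by (simp add: power_mult_distrib power2_eq_square mult_ac)
    then have a: "inner y y \<le> C * C * inner (P y) (P y)"
      by (simp only: power2_norm_eq_inner)
    have "C * C * inner (P y) (P y) \<le> C * C * (K0 * inner (P y) y)"
      using cs[OF y] by (intro mult_left_mono) auto
    with a have "inner y y \<le> C * C * K0 * inner (P y) y" by simp
    also have "\<dots> \<le> (C * C * K0 + 1) * inner (P y) y" using posP[OF y] by (simp add: algebra_simps)
    finally have "\<delta> * inner y y \<le> inner (P y) y"
      unfolding \<delta>_def using cck by (simp add: field_simps)
    then show "(m + \<delta>) * inner y y \<le> inner (X y) y"
      by (simp add: P_def inner_diff_left algebra_simps)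
  qed
  with dpos show ?thesis by blast
qed

lemma nr_sup:
  fixes X :: "'a::real_inner \<Rightarrow> 'a"
  assumes bl: "bounded_linear X" and sym: "\<And>y z. inner (X y) z = inner y (X z)"
    and sub: "subspace W" and inv: "\<And>y. y \<in> W \<Longrightarrow> X y \<in> W"
    and ab: "a \<le> b"
    and lo: "\<And>y. y \<in> W \<Longrightarrow> a * inner y y \<le> inner (X y) y"
    and bb: "\<And>c. a \<le> c \<Longrightarrow> c < b \<Longrightarrow> \<exists>C. \<forall>y\<in>W. norm y \<le> C * norm (X y - c *\<^sub>R y)"
  shows "\<forall>y\<in>W. b * inner y y \<le> inner (X y) y"
proof -
  define M where "M = {c. a \<le> c \<and> c \<le> b \<and> (\<forall>y\<in>W. c * inner y y \<le> inner (X y) y)}"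
  define m where "m = Sup M"
  have aM: "a \<in> M" using ab lo by (auto simp: M_def)
  have bddM: "bdd_above M" by (auto simp: M_def bdd_above_def)
  have am: "a \<le> m" unfolding m_def using aM bddM by (rule cSup_upper)
  have mb: "m \<le> b" unfolding m_def using aM by (intro cSup_least) (auto simp: M_def)
  have mvalid: "\<forall>y\<in>W. m * inner y y \<le> inner (X y) y"
  proof
    fix y assume y: "y \<in> W"
    show "m * inner y y \<le> inner (X y) y"
    proof (cases "y = 0")
      case True
      then show ?thesis by simp
    next
      case False
      then have yy: "inner y y > 0" by simp
      have "m \<le> inner (X y) y / inner y y" unfolding m_def
      proof (rule cSup_least)
        show "M \<noteq> {}" using aM by blast
        fix c assume "c \<in> M"
        then have "c * inner y y \<le> inner (X y) y" using y by (auto simp: M_def)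
        then show "c \<le> inner (X y) y / inner y y" using yy by (simp add: field_simps)
      qed
      then show ?thesis using yy by (simp add: field_simps)
    qed
  qed
  have "m = b"
  proof (rule ccontr)
    assume "m \<noteq> b"
    then have mlt: "m < b" using mb by simp
    obtain C where C: "\<forall>y\<in>W. norm y \<le> C * norm (X y - m *\<^sub>R y)" using bb[OF am mlt] by blast
    obtain \<delta> where d: "\<delta> > 0" "\<forall>y\<in>W. (m + \<delta>) * inner y y \<le> inner (X y) y"
      using nr_step[OF bl sym sub inv, of m C] mvalid C by blast
    define c where "c = min (m + \<delta>) b"
    have "c \<in> M" unfolding M_def c_def
    proof (intro CollectI conjI ballI)
      fix y assume y: "y \<in> W"
      have "min (m + \<delta>) b * inner y y \<le> (m + \<delta>) * inner y y"
        by (intro mult_right_mono) auto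
      then show "min (m + \<delta>) b * inner y y \<le> inner (X y) y" using d y by force
    qed (use am d mlt in auto)
    then have "c \<le> m" unfolding m_def using bddM by (rule cSup_upper)
    then show False using d mlt by (simp add: c_def)
  qed
  then show ?thesis using mvalid by simp
qed




locale gapsetup =
  fixes D :: "'a::{real_inner, complete_space} set" and H :: "'a \<Rightarrow> 'a" and E0 E1 :: real
  assumes sa: "densely_defined_self_adjoint D H"
    and bdd: "bdd_below (op_spectrum D H)"
    and E0_def: "E0 = Inf (op_spectrum D H)"
    and E1_def: "E1 = Inf (op_spectrum D H - {E0})"
    and gap: "E1 > E0"
begin

definition "lam0 = E0 - 1"
definition "V = eigenspace_op D H E0"
definition "W = orthogonal_comp V"
definition "T y = (THE x. x \<in> D \<and> H x - lam0 *\<^sub>R x = y)"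
definition "S y = y - T y"
definition "eps = (E1 - E0) / (1 + (E1 - E0))"

lemma subD: "subspace D" and H_add: "x \<in> D \<Longrightarrow> y \<in> D \<Longrightarrow> H (x + y) = H x + H y"
  and H_scale: "x \<in> D \<Longrightarrow> H (c *\<^sub>R x) = c *\<^sub>R H x"
  and H_sym: "x \<in> D \<Longrightarrow> y \<in> D \<Longrightarrow> inner (H x) y = inner x (H y)"
  using sa by (auto simp: densely_defined_self_adjoint_def lin_op_on_def)

lemma H_diff: "x \<in> D \<Longrightarrow> y \<in> D \<Longrightarrow> H (x - y) = H x - H y"
proof -
  assume x: "x \<in> D" and y: "y \<in> D"
  have my: "(-1) *\<^sub>R y \<in> D" using subD y by (simp add: subspace_neg)
  have "H (x - y) = H (x + (-1) *\<^sub>R y)" by simp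
  also have "\<dots> = H x + H ((-1) *\<^sub>R y)" using H_add[OF x my] .
  also have "\<dots> = H x - H y" using H_scale[OF y, of "-1"] by simp
  finally show ?thesis .
qed

lemma not_spec_below: "s < E0 \<Longrightarrow> s \<notin> op_spectrum D H"
  using bdd E0_def cInf_lower by fastforce

lemma not_spec_gap: "E0 < s \<Longrightarrow> s < E1 \<Longrightarrow> s \<notin> op_spectrum D H"
proof
  assume a: "E0 < s" "s < E1" "s \<in> op_spectrum D H"
  have "bdd_below (op_spectrum D H - {E0})" using bdd by (rule bdd_below_mono) auto
  then have "E1 \<le> s" unfolding E1_def using a by (intro cInf_lower) auto
  then show False using a by simp
qed

lemma resolvent:
  assumes "s \<notin> op_spectrum D H"
  shows "\<forall>y. \<exists>x\<in>D. H x - s *\<^sub>R x = y" "\<exists>C. \<forall>x\<in>D. norm x \<le> C * norm (H x - s *\<^sub>R x)"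
  using assms by (auto simp: op_spectrum_def)

lemma lam0_res: "lam0 \<notin> op_spectrum D H"
  by (rule not_spec_below) (simp add: lam0_def)

lemma T_unique_aux:
  assumes "x \<in> D" "x' \<in> D" "H x - lam0 *\<^sub>R x = H x' - lam0 *\<^sub>R x'"
  shows "x = x'"
proof -
  obtain C where C: "\<forall>x\<in>D. norm x \<le> C * norm (H x - lam0 *\<^sub>R x)"
    using resolvent(2)[OF lam0_res] by blast
  have d: "x - x' \<in> D" using subD assms by (simp add: subspace_diff)
  have "H (x - x') - lam0 *\<^sub>R (x - x') = (H x - lam0 *\<^sub>R x) - (H x' - lam0 *\<^sub>R x')"
    using H_diff[OF assms(1,2)] by (simp add: scaleR_diff_right)
  also have "\<dots> = 0" using assms(3) by simp
  finally have "H (x - x') - lam0 *\<^sub>R (x - x') = 0" .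
  then have "norm (x - x') \<le> 0" using C d by force
  then show ?thesis by simp
qed

lemma T_prop: "T y \<in> D \<and> H (T y) - lam0 *\<^sub>R T y = y"
proof -
  obtain x where x: "x \<in> D" "H x - lam0 *\<^sub>R x = y" using resolvent(1)[OF lam0_res] by blast
  have "\<exists>!x. x \<in> D \<and> H x - lam0 *\<^sub>R x = y"
    using x T_unique_aux by blast
  then show ?thesis unfolding T_def by (rule theI')
qed

lemma T_D: "T y \<in> D" and T_eq: "H (T y) - lam0 *\<^sub>R T y = y"
  using T_prop by auto

lemma T_unique: "x \<in> D \<Longrightarrow> H x - lam0 *\<^sub>R x = y \<Longrightarrow> T y = x"
  using T_unique_aux T_prop by metis

lemma T_add: "T (a + b) = T a + T b"
proof (rule T_unique)
  show "T a + T b \<in> D" using subD T_D by (simp add: subspace_add)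
  show "H (T a + T b) - lam0 *\<^sub>R (T a + T b) = a + b"
    using H_add[OF T_D T_D, of a b] T_eq[of a] T_eq[of b] by (simp add: algebra_simps)
qed

lemma T_scale: "T (c *\<^sub>R a) = c *\<^sub>R T a"
proof (rule T_unique)
  show "c *\<^sub>R T a \<in> D" using subD T_D by (simp add: subspace_scale)
  show "H (c *\<^sub>R T a) - lam0 *\<^sub>R (c *\<^sub>R T a) = c *\<^sub>R a"
    using H_scale[OF T_D, of c a] T_eq[of a]
    by (metis scaleR_right_diff_distrib scaleR_left_commute)
qed

lemma T_bl: "bounded_linear T"
proof -
  obtain C where C: "\<forall>x\<in>D. norm x \<le> C * norm (H x - lam0 *\<^sub>R x)"
    using resolvent(2)[OF lam0_res] by blast
  have "norm (T y) \<le> norm y * C" for y using C T_D T_eq by (metis mult.commute)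
  then show ?thesis by (intro bounded_linear_intro[of _ C] T_add T_scale) auto
qed

lemma T_sym: "inner (T y) z = inner y (T z)"
proof -
  have "inner (T y) z = inner (T y) (H (T z) - lam0 *\<^sub>R T z)" using T_eq[of z] by simp
  also have "\<dots> = inner (T y) (H (T z)) - lam0 * inner (T y) (T z)" by (simp add: inner_diff_right)
  also have "\<dots> = inner (H (T y)) (T z) - lam0 * inner (T y) (T z)" using H_sym[OF T_D T_D] by simp
  also have "\<dots> = inner (H (T y) - lam0 *\<^sub>R T y) (T z)" by (simp add: inner_diff_left)
  also have "\<dots> = inner y (T z)" using T_eq[of y] by simp
  finally show ?thesis .
qed

lemma V_D: "v \<in> V \<Longrightarrow> v \<in> D" and V_H: "v \<in> V \<Longrightarrow> H v = E0 *\<^sub>R v"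
  by (auto simp: V_def eigenspace_op_def)

lemma T_V: "v \<in> V \<Longrightarrow> T v = v"
  by (rule T_unique) (auto simp: V_D V_H lam0_def algebra_simps)

lemma S_bl: "bounded_linear S"
  unfolding S_def[abs_def] by (intro bounded_linear_sub bounded_linear_ident T_bl)

lemma S_sym: "inner (S y) z = inner y (S z)"
  by (simp add: S_def inner_diff_left inner_diff_right T_sym)

lemma S_diff: "S (a - b) = S a - S b" and S_scale: "S (c *\<^sub>R a) = c *\<^sub>R S a"
  using linear_diff[OF bounded_linear.linear[OF S_bl]] linear_scale[OF bounded_linear.linear[OF S_bl]] by auto

lemma S_V: "v \<in> V \<Longrightarrow> S v = 0" by (simp add: S_def T_V)

lemma subW: "subspace W" unfolding W_def by (rule subspace_orthogonal_comp)

lemma closedW: "closed W"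
proof -
  have "W = (\<Inter>v\<in>V. {x. inner v x = 0})" by (auto simp: W_def orthogonal_comp_def orthogonal_def)
  then show ?thesis by (auto intro!: closed_INT closed_hyperplane)
qed

lemma W_iff: "x \<in> W \<longleftrightarrow> (\<forall>v\<in>V. inner v x = 0)"
  by (auto simp: W_def orthogonal_comp_def orthogonal_def)

lemma S_W: "S y \<in> W"
  unfolding W_iff using S_sym S_V by (metis inner_commute inner_zero_right)

lemma T_W: "y \<in> W \<Longrightarrow> T y \<in> W"
proof -
  assume "y \<in> W"
  then have "y - S y \<in> W" using subW S_W by (simp add: subspace_diff)
  then show ?thesis by (simp add: S_def)
qed

lemma F1:
  assumes nu: "\<nu> \<noteq> 0" and s: "lam0 + 1 / \<nu> \<notin> op_spectrum D H"
  shows "\<exists>C\<ge>0. \<forall>y. norm y \<le> C * norm (T y - \<nu> *\<^sub>R y)"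
proof -
  obtain C1 where C1: "\<forall>x\<in>D. norm x \<le> C1 * norm (H x - (lam0 + 1 / \<nu>) *\<^sub>R x)"
    using resolvent(2)[OF s] by blast
  define C where "C = (max C1 0 / \<bar>\<nu>\<bar> + 1) / \<bar>\<nu>\<bar>"
  have "C \<ge> 0" unfolding C_def by simp
  moreover have "norm y \<le> C * norm (T y - \<nu> *\<^sub>R y)" for y
  proof -
    have "H (T y) - (lam0 + 1 / \<nu>) *\<^sub>R T y = y - (1 / \<nu>) *\<^sub>R T y"
      using T_eq[of y] by (simp add: algebra_simps)
    also have "\<dots> = - (1 / \<nu>) *\<^sub>R (T y - \<nu> *\<^sub>R y)" using nu by (simp add: algebra_simps)
    finally have e: "H (T y) - (lam0 + 1 / \<nu>) *\<^sub>R T y = - (1 / \<nu>) *\<^sub>R (T y - \<nu> *\<^sub>R y)" .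
    have "norm (T y) \<le> C1 * norm (- (1 / \<nu>) *\<^sub>R (T y - \<nu> *\<^sub>R y))" using C1 T_D e by metis
    also have "\<dots> \<le> max C1 0 * (norm (T y - \<nu> *\<^sub>R y) / \<bar>\<nu>\<bar>)"
      by (intro mult_mono) (auto simp: divide_inverse abs_inverse)
    finally have a: "norm (T y) \<le> max C1 0 / \<bar>\<nu>\<bar> * norm (T y - \<nu> *\<^sub>R y)" by simp
    have "y = (1 / \<nu>) *\<^sub>R (T y - (T y - \<nu> *\<^sub>R y))" using nu by simp
    then have "norm y = (norm (T y - (T y - \<nu> *\<^sub>R y))) / \<bar>\<nu>\<bar>"
      by (metis norm_scaleR abs_divide abs_one divide_inverse_commute inverse_eq_divide mult.commute)
    also have "\<dots> \<le> (norm (T y) + norm (T y - \<nu> *\<^sub>R y)) / \<bar>\<nu>\<bar>"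
      by (intro divide_right_mono norm_triangle_ineq4) auto
    also have "\<dots> \<le> (max C1 0 / \<bar>\<nu>\<bar> * norm (T y - \<nu> *\<^sub>R y) + norm (T y - \<nu> *\<^sub>R y)) / \<bar>\<nu>\<bar>"
      using a by (intro divide_right_mono) auto
    also have "\<dots> = C * norm (T y - \<nu> *\<^sub>R y)" by (simp add: C_def field_simps)
    finally show ?thesis .
  qed
  ultimately show ?thesis by blast
qed

end



lemma inner_bound:
  fixes X :: "'a::real_inner \<Rightarrow> 'a"
  assumes "norm (X y) \<le> norm y * K"
  shows "\<bar>inner (X y) y\<bar> \<le> K * inner y y"
proof -
  have "\<bar>inner (X y) y\<bar> \<le> norm (X y) * norm y" by (rule Cauchy_Schwarz_ineq2)
  also have "\<dots> \<le> norm y * K * norm y" using assms by (intro mult_right_mono) auto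
  also have "\<dots> = K * inner y y" by (simp add: power2_norm_eq_inner[symmetric] power2_eq_square)
  finally show ?thesis .
qed

context gapsetup begin

lemma g_pos: "E1 - E0 > 0" using gap by simp

lemma eps_pos: "0 < eps" and eps_lt1: "eps < 1"
  using g_pos by (auto simp: eps_def field_simps)

lemma one_minus_eps: "1 - eps = 1 / (1 + (E1 - E0))"
  using g_pos by (simp add: eps_def field_simps)

lemma T_pos: "0 \<le> inner (T y) y"
proof -
  obtain K where K: "K > 0" "\<And>x. norm (T x) \<le> norm x * K"
    using bounded_linear.pos_bounded[OF T_bl] by blast
  have lo: "(-K) * inner y y \<le> inner (T y) y" for y
    using inner_bound[of T, OF K(2)[of y]] by linarith
  have "\<forall>y\<in>UNIV. 0 * inner y y \<le> inner (T y) y"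
  proof (rule nr_sup[OF T_bl T_sym subspace_UNIV, of "-K" 0])
    fix c :: real assume c: "-K \<le> c" "c < 0"
    have "lam0 + 1 / c < E0" using c by (simp add: lam0_def divide_neg_pos)
    then have "lam0 + 1 / c \<notin> op_spectrum D H" by (rule not_spec_below)
    then show "\<exists>C. \<forall>y\<in>UNIV. norm y \<le> C * norm (T y - c *\<^sub>R y)" using F1[of c] c by auto
  qed (use K lo in auto)
  then show ?thesis by simp
qed

lemma T_le1: "inner (T y) y \<le> inner y y"
proof -
  obtain K where K: "K > 0" "\<And>x. norm (T x) \<le> norm x * K"
    using bounded_linear.pos_bounded[OF T_bl] by blast
  have lo: "(-(K+1)) * inner y y \<le> inner (- T y) y" for y
    using abs_le_D1[OF inner_bound[of T, OF K(2)[of y]]] by (simp add: algebra_simps) (metis add_increasing inner_ge_zero)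
  have bl: "bounded_linear (\<lambda>y. - T y)" by (rule bounded_linear_minus[OF T_bl])
  have sym: "inner (- T y) z = inner y (- T z)" for y z by (simp add: T_sym)
  have "\<forall>y\<in>UNIV. (-1) * inner y y \<le> inner (- T y) y"
  proof (rule nr_sup[OF bl sym subspace_UNIV, of "-(K+1)" "-1"])
    fix c :: real assume c: "-(K+1) \<le> c" "c < -1"
    have "1 / (-c) < 1" using c by (simp add: less_divide_eq)
    then have "lam0 + 1 / (-c) < E0" by (simp add: lam0_def)
    then have "lam0 + 1 / (-c) \<notin> op_spectrum D H" by (rule not_spec_below)
    then obtain C where "\<forall>y. norm y \<le> C * norm (T y - (-c) *\<^sub>R y)" using F1[of "-c"] c by auto
    moreover have "norm (- T y - c *\<^sub>R y) = norm (T y - (-c) *\<^sub>R y)" for y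
    proof -
      have "- T y - c *\<^sub>R y = - (T y - (-c) *\<^sub>R y)" by simp
      then show ?thesis by (simp only: norm_minus_cancel)
    qed
    ultimately show "\<exists>C. \<forall>y\<in>UNIV. norm y \<le> C * norm (- T y - c *\<^sub>R y)" by auto
  qed (use K lo in auto)
  then show ?thesis by simp
qed

lemma S_nonneg: "0 \<le> inner (S y) y" using T_le1[of y] by (simp add: S_def inner_diff_left)
lemma S_le1: "inner (S y) y \<le> inner y y" using T_pos[of y] by (simp add: S_def inner_diff_left)

lemma S_norm: "inner (S y) (S y) \<le> inner (S y) y"
  using csk[OF S_bl S_sym subspace_UNIV, of 1 y] S_nonneg S_le1 by auto

lemma Sbb:
  assumes r: "0 < r" "r < eps"
  shows "\<exists>C\<ge>0. \<forall>y. norm y \<le> C * norm (S y - r *\<^sub>R y)"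
proof -
  have g: "E1 - E0 > 0" by (rule g_pos)
  have nu: "1 - r \<noteq> 0" using r eps_lt1 by simp
  have "1 - r > 1 - eps" using r by simp
  then have "1 - r > 1 / (1 + (E1 - E0))" by (simp add: one_minus_eps)
  then have "1 / (1 - r) < 1 + (E1 - E0)" using g r eps_lt1
    by (simp add: divide_less_eq less_divide_eq mult.commute)
  moreover have "1 / (1 - r) > 1" using r eps_lt1 by (simp add: less_divide_eq)
  ultimately have "E0 < lam0 + 1 / (1 - r)" "lam0 + 1 / (1 - r) < E1" by (auto simp: lam0_def)
  then have "lam0 + 1 / (1 - r) \<notin> op_spectrum D H" by (rule not_spec_gap)
  then obtain C where C: "C \<ge> 0" "\<forall>y. norm y \<le> C * norm (T y - (1 - r) *\<^sub>R y)" using F1[OF nu] by auto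
  have "norm (S y - r *\<^sub>R y) = norm (T y - (1 - r) *\<^sub>R y)" for y
  proof -
    have "S y - r *\<^sub>R y = - (T y - (1 - r) *\<^sub>R y)" by (simp add: S_def algebra_simps)
    then show ?thesis by (simp only: norm_minus_cancel)
  qed
  then show ?thesis using C by auto
qed

lemma sq: "eps * inner (S y) y \<le> inner (S y) (S y)"
proof -
  define X where "X = (\<lambda>y. S (S y) - eps *\<^sub>R S y)"
  have bl: "bounded_linear X" unfolding X_def
    by (intro bounded_linear_sub bounded_linear_compose[OF S_bl S_bl]
        bounded_linear_compose[OF bounded_linear_scaleR_right S_bl])
  have sym: "inner (X y) z = inner y (X z)" for y z
    by (simp add: X_def inner_diff_left inner_diff_right S_sym)
  have XS: "inner (X y) y = inner (S y) (S y) - eps * inner (S y) y" for y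
    by (simp add: X_def inner_diff_left S_sym)
  have lo: "(-(eps^2/4)) * inner y y \<le> inner (X y) y" for y
  proof -
    have a: "inner (S y) y \<le> norm (S y) * norm y" by (rule norm_cauchy_schwarz)
    have "0 \<le> (norm (S y) - eps * norm y / 2)^2" by simp
    then have "0 \<le> norm (S y)^2 - eps * (norm (S y) * norm y) + eps^2/4 * norm y ^2"
      by (simp add: power2_eq_square algebra_simps)
    moreover have "eps * inner (S y) y \<le> eps * (norm (S y) * norm y)"
      using a eps_pos by (intro mult_left_mono) auto
    ultimately show ?thesis unfolding XS by (simp add: power2_norm_eq_inner)
  qed
  have "\<forall>y\<in>UNIV. 0 * inner y y \<le> inner (X y) y"
  proof (rule nr_sup[OF bl sym subspace_UNIV, of "-(eps^2/4)" 0])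
    fix c :: real assume c: "-(eps^2/4) \<le> c" "c < 0"
    define d where "d = sqrt (eps^2 + 4 * c)"
    have d0: "0 \<le> d" using c by (simp add: d_def)
    have dd: "d * d = eps^2 + 4 * c" using c by (simp add: d_def)
    have "d^2 < eps^2" using dd c by (simp add: power2_eq_square)
    then have dlt: "d < eps" using eps_pos d0 by (simp add: power_less_imp_less_base)
    define r1 where "r1 = (eps - d) / 2"
    define r2 where "r2 = (eps + d) / 2"
    have r1: "0 < r1" "r1 < eps" using dlt d0 eps_pos by (auto simp: r1_def)
    have r2: "0 < r2" "r2 < eps" using dlt d0 eps_pos by (auto simp: r2_def)
    obtain C1 where C1: "C1 \<ge> 0" "\<forall>y. norm y \<le> C1 * norm (S y - r1 *\<^sub>R y)" using Sbb[OF r1] by auto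
    obtain C2 where C2: "C2 \<ge> 0" "\<forall>y. norm y \<le> C2 * norm (S y - r2 *\<^sub>R y)" using Sbb[OF r2] by auto
    have rs: "r1 + r2 = eps" "r1 * r2 = - c" using dd by (auto simp: r1_def r2_def field_simps power2_eq_square)
    have "norm y \<le> (C2 * C1) * norm (X y - c *\<^sub>R y)" for y
    proof -
      define z where "z = S y - r2 *\<^sub>R y"
      have "X y - c *\<^sub>R y = S z - r1 *\<^sub>R z"
      proof -
        have "S z - r1 *\<^sub>R z = S (S y) - (r1 + r2) *\<^sub>R S y + (r1 * r2) *\<^sub>R y"
          by (simp add: z_def S_diff S_scale algebra_simps)
        then show ?thesis using rs by (simp add: X_def)
      qed
      have "norm y \<le> C2 * norm z" using C2 by (simp add: z_def)
      also have "\<dots> \<le> C2 * (C1 * norm (S z - r1 *\<^sub>R z))" using C1 C2 by (intro mult_left_mono) auto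
      finally show ?thesis using \<open>X y - c *\<^sub>R y = S z - r1 *\<^sub>R z\<close> by simp
    qed
    then show "\<exists>C. \<forall>y\<in>UNIV. norm y \<le> C * norm (X y - c *\<^sub>R y)" by blast
  qed (use lo in auto)
  then have "0 \<le> inner (X y) y" by simp
  then show ?thesis using XS[of y] by simp
qed

end


context gapsetup begin

definition "rho = sqrt (1 - eps)"

lemma rho: "0 \<le> rho" "rho < 1" using eps_pos eps_lt1 by (auto simp: rho_def)

lemma V_sub: "subspace V"
  unfolding subspace_def
proof (intro conjI ballI allI)
  show "0 \<in> V" using subD H_scale[of 0 0] by (auto simp: V_def eigenspace_op_def subspace_0)
next
  fix x y assume "x \<in> V" "y \<in> V"
  then show "x + y \<in> V" using subD H_add by (auto simp: V_def eigenspace_op_def subspace_add algebra_simps)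
next
  fix c :: real and x assume "x \<in> V"
  then show "c *\<^sub>R x \<in> V" using subD H_scale by (auto simp: V_def eigenspace_op_def subspace_scale)
qed

lemma iter:
  "\<exists>z. z \<in> V \<and> x - z \<in> W \<and> norm (x - z) \<le> sqrt (inner (S x) x) / (1 - rho)"
proof -
  define f where "f y = inner (S y) y" for y
  define xs where "xs n = (T ^^ n) x" for n
  have xsS: "xs (Suc n) = T (xs n)" for n by (simp add: xs_def)
  have f0: "0 \<le> f y" for y by (simp add: f_def S_nonneg)
  have fT: "f (T y) \<le> (1 - eps) * f y" for y
  proof -
    have Ty: "T y = y - S y" by (simp add: S_def)
    have "f (T y) = inner (S y - S (S y)) (y - S y)" by (simp add: f_def Ty S_diff)
    also have "\<dots> = f y - 2 * inner (S y) (S y) + inner (S (S y)) (S y)"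
      using S_sym[of "S y" y] by (simp add: f_def inner_diff_left inner_diff_right)
    also have "\<dots> \<le> f y - inner (S y) (S y)" using S_le1[of "S y"] by simp
    also have "\<dots> \<le> f y - eps * f y" using sq[of y] by (simp add: f_def)
    finally show ?thesis by (simp add: algebra_simps)
  qed
  have fn: "f (xs n) \<le> (1 - eps)^n * f x" for n
  proof (induction n)
    case 0 then show ?case by (simp add: xs_def)
  next
    case (Suc n)
    have "f (xs (Suc n)) \<le> (1 - eps) * f (xs n)" using fT by (simp add: xsS)
    also have "\<dots> \<le> (1 - eps) * ((1 - eps)^n * f x)" using Suc eps_lt1 by (intro mult_left_mono) auto
    finally show ?case by simp
  qed
  define d where "d n = xs (Suc n) - xs n" for n
  have dS: "d n = - S (xs n)" for n by (simp add: d_def xsS S_def)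
  have dn: "norm (d n) \<le> sqrt (f x) * rho ^ n" for n
  proof -
    have "norm (d n) = sqrt (inner (S (xs n)) (S (xs n)))" by (simp add: dS norm_eq_sqrt_inner)
    also have "\<dots> \<le> sqrt (f (xs n))" using S_norm by (simp add: f_def)
    also have "\<dots> \<le> sqrt ((1 - eps)^n * f x)" using fn by simp
    also have "\<dots> = sqrt (f x) * rho ^ n" by (simp add: rho_def real_sqrt_mult real_sqrt_power)
    finally show ?thesis .
  qed
  define c where "c = sqrt (f x)"
  have c0: "0 \<le> c" using f0 by (simp add: c_def)
  have dn': "norm (d n) \<le> c * (rho ^ n - rho ^ Suc n) / (1 - rho)" for n
  proof -
    have "c * (rho ^ n - rho ^ Suc n) / (1 - rho) = c * rho ^ n"
      using rho by (simp add: field_simps)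
    then show ?thesis using dn[of n] by (simp add: c_def)
  qed
  have bnd: "norm (xs (n + k) - xs n) \<le> c * (rho ^ n - rho ^ (n + k)) / (1 - rho)" for n k
  proof (induction k)
    case 0 then show ?case by simp
  next
    case (Suc k)
    have "xs (n + Suc k) - xs n = (xs (n + k) - xs n) + d (n + k)" by (simp add: d_def)
    then have "norm (xs (n + Suc k) - xs n) \<le> norm (xs (n + k) - xs n) + norm (d (n + k))"
      by (metis norm_triangle_ineq)
    also have "\<dots> \<le> c * (rho ^ n - rho ^ (n + k)) / (1 - rho) + c * (rho ^ (n + k) - rho ^ Suc (n + k)) / (1 - rho)"
      using Suc dn'[of "n + k"] by linarith
    also have "\<dots> = (c * (rho ^ n - rho ^ (n + k)) + c * (rho ^ (n + k) - rho ^ Suc (n + k))) / (1 - rho)"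
      by (rule add_divide_distrib[symmetric])
    also have "\<dots> = c * (rho ^ n - rho ^ (n + Suc k)) / (1 - rho)"
      by (simp add: algebra_simps)
    finally show ?case .
  qed
  have bnd2: "norm (xs m - xs n) \<le> c * rho ^ n / (1 - rho)" if nm: "n \<le> m" for m n
  proof -
    obtain k where m: "m = n + k" using le_Suc_ex[OF nm] by auto
    have "norm (xs m - xs n) \<le> c * (rho ^ n - rho ^ (n + k)) / (1 - rho)" unfolding m by (rule bnd)
    also have "\<dots> \<le> c * rho ^ n / (1 - rho)"
    proof (intro divide_right_mono mult_left_mono)
      show "rho ^ n - rho ^ (n + k) \<le> rho ^ n" using rho by simp
    qed (use rho c0 in auto)
    finally show ?thesis .
  qed
  have "Cauchy xs"
  proof (rule CauchyI)
    fix e :: real assume e: "0 < e"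
    have "(\<lambda>n. rho ^ n) \<longlonglongrightarrow> 0" using rho by (intro LIMSEQ_power_zero) auto
    moreover have "0 < e * (1 - rho) / (c + 1)" using e rho c0 by simp
    ultimately have "eventually (\<lambda>n. rho ^ n < e * (1 - rho) / (c + 1)) sequentially"
      by (rule order_tendstoD(2))
    then obtain M where M: "rho ^ M < e * (1 - rho) / (c + 1)" by (auto simp: eventually_sequentially)
    have cM: "c * rho ^ M / (1 - rho) < e"
    proof -
      have "c * rho ^ M \<le> (c + 1) * rho ^ M" using rho by (simp add: algebra_simps)
      also have "\<dots> < (c + 1) * (e * (1 - rho) / (c + 1))" using M c0 by (intro mult_strict_left_mono) auto
      also have "\<dots> = e * (1 - rho)" using c0 by simp
      finally show ?thesis using rho by (simp add: divide_less_eq)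
    qed
    have "norm (xs m - xs n) < e" if "m \<ge> M" "n \<ge> M" for m n
    proof (cases "n \<le> m")
      case True
      have "norm (xs m - xs n) \<le> c * rho ^ n / (1 - rho)" using bnd2 True by blast
      also have "\<dots> \<le> c * rho ^ M / (1 - rho)" using rho c0 that
        by (intro divide_right_mono mult_left_mono power_decreasing) auto
      finally show ?thesis using cM by simp
    next
      case False
      have "norm (xs m - xs n) = norm (xs n - xs m)" by (rule norm_minus_commute)
      also have "\<dots> \<le> c * rho ^ m / (1 - rho)" using bnd2 False by simp
      also have "\<dots> \<le> c * rho ^ M / (1 - rho)" using rho c0 that
        by (intro divide_right_mono mult_left_mono power_decreasing) auto
      finally show ?thesis using cM by simp
    qed
    then show "\<exists>M. \<forall>m\<ge>M. \<forall>n\<ge>M. norm (xs m - xs n) < e" by blast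
  qed
  then obtain z where lim: "xs \<longlonglongrightarrow> z" using Cauchy_convergent convergent_def by blast
  have "(\<lambda>n. T (xs n)) \<longlonglongrightarrow> T z" using bounded_linear.tendsto[OF T_bl lim] by simp
  moreover have "(\<lambda>n. T (xs n)) \<longlonglongrightarrow> z" using LIMSEQ_Suc[OF lim] by (simp add: xsS)
  ultimately have Tz: "T z = z" by (rule LIMSEQ_unique)
  have zV: "z \<in> V"
  proof -
    have "z \<in> D" using T_D[of z] Tz by simp
    moreover have "H z - lam0 *\<^sub>R z = z" using T_eq[of z] Tz by simp
    then have "H z = E0 *\<^sub>R z" by (simp add: lam0_def algebra_simps)
    ultimately show ?thesis by (simp add: V_def eigenspace_op_def)
  qed
  have dW: "d n \<in> W" for n using S_W subW by (simp add: dS subspace_neg)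
  have xsW: "x - xs n \<in> W" for n
  proof (induction n)
    case 0 then show ?case using subW by (simp add: xs_def subspace_0)
  next
    case (Suc n)
    have e: "x - xs (Suc n) = (x - xs n) - d n" by (simp add: d_def)
    have "(x - xs n) - d n \<in> W" using Suc dW[of n] subW by (simp add: subspace_diff)
    then show ?case by (simp only: e)
  qed
  have xzW: "x - z \<in> W"
    by (rule closed_sequentially[where f="\<lambda>n. x - xs n", OF closedW xsW]) (intro tendsto_diff tendsto_const lim)
  have "(\<lambda>n. norm (xs n - x)) \<longlonglongrightarrow> norm (z - x)" by (intro tendsto_norm tendsto_diff lim tendsto_const)
  moreover have "\<forall>n\<ge>0. norm (xs n - x) \<le> c / (1 - rho)"
    using bnd2[of 0] rho by (simp add: xs_def)
  ultimately have "norm (z - x) \<le> c / (1 - rho)" by (intro LIMSEQ_le_const2) auto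
  then show ?thesis using zV xzW by (auto simp: c_def f_def norm_minus_commute)
qed

end


context gapsetup begin

lemma VW0: "v \<in> V \<Longrightarrow> v \<in> W \<Longrightarrow> v = 0"
  using W_iff by fastforce

lemma proj: "orth_proj V x \<in> V \<and> x - orth_proj V x \<in> W"
proof -
  obtain z where z: "z \<in> V" "x - z \<in> W" using iter by blast
  have "orth_proj V x = z" unfolding orth_proj_def
  proof (rule the_equality)
    show "z \<in> V \<and> (\<forall>v\<in>V. inner (x - z) v = 0)" using z W_iff by (auto simp: inner_commute)
  next
    fix p assume p: "p \<in> V \<and> (\<forall>v\<in>V. inner (x - p) v = 0)"
    have "x - p \<in> W" using p W_iff by (auto simp: inner_commute)
    then have "(x - p) - (x - z) \<in> W" by (rule subspace_diff[OF subW _ z(2)])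
    then have "z - p \<in> W" by simp
    moreover have "z - p \<in> V" using z p V_sub by (simp add: subspace_diff)
    ultimately show "p = z" using VW0 by fastforce
  qed
  then show ?thesis using z by simp
qed

lemma coer: "y \<in> W \<Longrightarrow> norm y \<le> (1 / (1 - rho)^2) * norm (S y)"
proof -
  assume y: "y \<in> W"
  obtain z where z: "z \<in> V" "y - z \<in> W" "norm (y - z) \<le> sqrt (inner (S y) y) / (1 - rho)"
    using iter by blast
  have "y - (y - z) \<in> W" by (rule subspace_diff[OF subW y z(2)])
  then have "z = 0" using VW0 z by simp
  then have a: "norm y \<le> sqrt (inner (S y) y) / (1 - rho)" using z by simp
  have r: "0 < 1 - rho" using rho by simp
  have "norm y * (1 - rho) \<le> sqrt (inner (S y) y)" using a r by (simp add: le_divide_eq)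
  then have "(norm y * (1 - rho))^2 \<le> (sqrt (inner (S y) y))^2" using r by (intro power_mono) auto
  also have "\<dots> = inner (S y) y" using S_nonneg by simp
  also have "\<dots> \<le> norm (S y) * norm y" by (rule norm_cauchy_schwarz)
  finally have b: "norm y * norm y * (1 - rho)^2 \<le> norm (S y) * norm y" by (simp add: power2_eq_square algebra_simps)
  show ?thesis
  proof (cases "y = 0")
    case True then show ?thesis by simp
  next
    case False
    then have "norm y * (1 - rho)^2 \<le> norm (S y)" using b by (simp add: algebra_simps)
    then show ?thesis using r by (simp add: field_simps)
  qed
qed

lemma S_W_lower: "y \<in> W \<Longrightarrow> eps * inner y y \<le> inner (S y) y"
proof -
  assume y: "y \<in> W"
  have "\<forall>y\<in>W. eps * inner y y \<le> inner (S y) y"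
  proof (rule nr_sup[OF S_bl S_sym subW, of 0 eps])
    fix c :: real assume c: "0 \<le> c" "c < eps"
    show "\<exists>C. \<forall>y\<in>W. norm y \<le> C * norm (S y - c *\<^sub>R y)"
    proof (cases "c = 0")
      case True then show ?thesis using coer by (intro exI[of _ "1 / (1 - rho)^2"]) auto
    next
      case False then show ?thesis using Sbb[of c] c by fastforce
    qed
  qed (use S_W eps_pos S_nonneg in auto)
  then show ?thesis using y by blast
qed

lemma gap_ineq:
  assumes z: "z \<in> D" "z \<in> W"
  shows "E1 * inner z z \<le> inner z (H z)"
proof -
  define y where "y = H z - lam0 *\<^sub>R z"
  have Ty: "T y = z" using z by (intro T_unique) (auto simp: y_def)
  have yW: "y \<in> W" unfolding W_iff
  proof
    fix v assume v: "v \<in> V"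
    have "inner v y = inner v (H z) - lam0 * inner v z" by (simp add: y_def inner_diff_right)
    also have "inner v (H z) = inner (H v) z" using H_sym[OF V_D[OF v] z(1)] by simp
    also have "\<dots> = E0 * inner v z" using V_H[OF v] by simp
    also have "inner v z = 0" using z(2) v W_iff by blast
    finally show "inner v y = 0" by simp
  qed
  have up: "\<And>u. u \<in> W \<Longrightarrow> inner (T u) u \<le> (1 - eps) * inner u u"
    using S_W_lower by (simp add: S_def inner_diff_left algebra_simps)
  have "inner (T y) (T y) \<le> (1 - eps) * inner (T y) y"
    by (rule csk[OF T_bl T_sym subW T_W T_pos up]) (use eps_lt1 yW in auto)
  then have "inner z z \<le> (1 - eps) * (inner z (H z) - lam0 * inner z z)"
    by (simp only: Ty) (simp add: y_def inner_diff_right)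
  then have "inner z z \<le> (inner z (H z) - lam0 * inner z z) / (1 + (E1 - E0))"
    by (simp add: one_minus_eps)
  then have "(1 + (E1 - E0)) * inner z z \<le> inner z (H z) - lam0 * inner z z"
    using g_pos by (simp add: le_divide_eq mult.commute)
  then show ?thesis by (simp add: lam0_def algebra_simps)
qed

end



locale flowsetup = gapsetup D H E0 E1 for D :: "'a::{real_inner, complete_space} set" and H E0 E1 +
  fixes \<psi>0 :: 'a and \<psi> :: "real \<Rightarrow> 'a"
  assumes \<psi>0_unit: "norm \<psi>0 = 1"
    and \<psi>0_not_perp: "\<psi>0 \<notin> orthogonal_comp (eigenspace_op D H E0)"
    and \<psi>_sphere: "\<forall>t\<ge>0. norm (\<psi> t) = 1 \<and> \<psi> t \<in> D"
    and \<psi>_flow: "\<forall>t\<ge>0. (\<psi> has_vector_derivative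
                   (-2) *\<^sub>R (H (\<psi> t) - energy H (\<psi> t) *\<^sub>R \<psi> t)) (at t within {0..})"
    and \<psi>_init: "\<psi> 0 = \<psi>0"
begin

definition "a0 = orth_proj V \<psi>0"
definition "u = (1 / norm a0) *\<^sub>R a0"
definition "En t = inner (\<psi> t) (H (\<psi> t))"
definition "p t = inner (\<psi> t) u"

lemma a0V: "a0 \<in> V" and a0W: "\<psi>0 - a0 \<in> W" using proj[of \<psi>0] by (auto simp: a0_def)

lemma a0nz: "a0 \<noteq> 0"
  using a0W \<psi>0_not_perp by (auto simp: W_def V_def)

lemma uV: "u \<in> V" using a0V V_sub by (simp add: u_def subspace_scale)
lemma norm_u: "norm u = 1" using a0nz by (simp add: u_def)
lemma inner_uu: "inner u u = 1" using norm_u by (simp add: norm_eq_sqrt_inner)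

lemma psi_norm: "t \<ge> 0 \<Longrightarrow> inner (\<psi> t) (\<psi> t) = 1" using \<psi>_sphere by (simp add: norm_eq_sqrt_inner)
lemma psi_D: "t \<ge> 0 \<Longrightarrow> \<psi> t \<in> D" using \<psi>_sphere by simp

lemma energy_eq: "t \<ge> 0 \<Longrightarrow> energy H (\<psi> t) = En t"
  using psi_norm by (simp add: energy_def En_def)

lemma inner_a0: "inner \<psi>0 v = inner a0 v" if "v \<in> V" for v
proof -
  have "inner v (\<psi>0 - a0) = 0" using a0W that W_iff by blast
  then show ?thesis by (simp add: inner_diff_right inner_commute)
qed

lemma p0: "p 0 = norm a0"
proof -
  have "p 0 = inner \<psi>0 u" by (simp add: p_def \<psi>_init)
  also have "\<dots> = inner a0 u" using inner_a0 uV by simp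
  also have "\<dots> = norm a0"
  proof -
    have "inner a0 a0 = norm a0 * norm a0" by (simp add: power2_norm_eq_inner[symmetric] power2_eq_square)
    then show ?thesis using a0nz by (simp add: u_def)
  qed
  finally show ?thesis .
qed

lemma deriv_q:
  assumes t: "t \<ge> 0" and v: "v \<in> V"
  shows "((\<lambda>t. inner (\<psi> t) v) has_real_derivative (-2) * (E0 - En t) * inner (\<psi> t) v) (at t within {0..})"
proof -
  have "((\<lambda>t. inner (\<psi> t) v) has_vector_derivative inner ((-2) *\<^sub>R (H (\<psi> t) - energy H (\<psi> t) *\<^sub>R \<psi> t)) v) (at t within {0..})"
    using \<psi>_flow t by (intro bounded_linear.has_vector_derivative[OF bounded_linear_inner_left]) auto
  moreover have "inner ((-2) *\<^sub>R (H (\<psi> t) - energy H (\<psi> t) *\<^sub>R \<psi> t)) v = (-2) * (E0 - En t) * inner (\<psi> t) v"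
  proof -
    have "inner (H (\<psi> t)) v = inner (\<psi> t) (H v)" using H_sym[OF psi_D[OF t] V_D[OF v]] .
    also have "\<dots> = E0 * inner (\<psi> t) v" using V_H[OF v] by simp
    finally show ?thesis using energy_eq[OF t] by (simp add: inner_diff_left algebra_simps)
  qed
  ultimately show ?thesis by (simp add: has_real_derivative_iff_has_vector_derivative)
qed

lemma cont_q: "v \<in> V \<Longrightarrow> continuous_on {0..} (\<lambda>t. inner (\<psi> t) v)"
  unfolding continuous_on_eq_continuous_within
  using deriv_q by (auto intro: DERIV_continuous)

end


context flowsetup begin

lemma deriv_p: "t \<ge> 0 \<Longrightarrow> (p has_real_derivative (-2) * (E0 - En t) * p t) (at t within {0..})"
  using deriv_q[OF _ uV] unfolding p_def[abs_def] by simp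

lemma ratio:
  assumes tau: "\<tau> \<ge> 0" and pos: "\<forall>s\<in>{0..\<tau>}. p s > 0" and v: "v \<in> V" and s: "s \<in> {0..\<tau>}"
  shows "inner (\<psi> s) v = p s * inner u v"
proof -
  define h where "h s = inner (\<psi> s) v / p s" for s
  have "\<forall>x\<in>{0..\<tau>}. (h has_field_derivative 0) (at x within {0..\<tau>})"
  proof
    fix x assume x: "x \<in> {0..\<tau>}"
    have x0: "0 \<le> x" using x by simp
    have dq: "((\<lambda>t. inner (\<psi> t) v) has_real_derivative (-2) * (E0 - En x) * inner (\<psi> x) v) (at x within {0..\<tau>})"
      by (rule DERIV_subset[OF deriv_q[OF x0 v]]) auto
    have dp: "(p has_real_derivative (-2) * (E0 - En x) * p x) (at x within {0..\<tau>})"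
      by (rule DERIV_subset[OF deriv_p[OF x0]]) auto
    have "(h has_field_derivative (((-2) * (E0 - En x) * inner (\<psi> x) v) * p x - inner (\<psi> x) v * ((-2) * (E0 - En x) * p x)) / (p x * p x)) (at x within {0..\<tau>})"
    proof -
      have pnz: "p x \<noteq> 0" using pos x by force
      show ?thesis unfolding h_def by (rule DERIV_divide[OF dq dp pnz])
    qed
    moreover have "(((-2) * (E0 - En x) * inner (\<psi> x) v) * p x - inner (\<psi> x) v * ((-2) * (E0 - En x) * p x)) / (p x * p x) = 0"
      by (simp add: algebra_simps)
    ultimately show "(h has_field_derivative 0) (at x within {0..\<tau>})" by simp
  qed
  then obtain c where c: "\<forall>x\<in>{0..\<tau>}. h x = c"
    using has_field_derivative_zero_constant[of "{0..\<tau>}" h] by auto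
  have "h s = h 0" using c s tau by simp
  also have "h 0 = inner u v"
  proof -
    have "h 0 = inner a0 v / norm a0" using inner_a0[OF v] p0 by (simp add: h_def \<psi>_init)
    also have "\<dots> = inner u v" by (simp add: u_def divide_inverse mult.commute)
    finally show ?thesis .
  qed
  finally have hs: "h s = inner u v" .
  have pnz: "p s \<noteq> 0" using pos s by force
  have "inner (\<psi> s) v = h s * p s" using pnz by (simp add: h_def)
  then show ?thesis using hs by simp
qed

lemma En_bound:
  assumes s: "s \<ge> 0" and rat: "\<forall>v\<in>V. inner (\<psi> s) v = p s * inner u v"
  shows "(E1 - E0) * (1 - p s ^ 2) \<le> En s - E0"
proof -
  define P where "P = p s"
  define r where "r = \<psi> s - P *\<^sub>R u"
  have uD: "u \<in> D" using V_D uV by simp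
  have puD: "P *\<^sub>R u \<in> D" using subD uD by (simp add: subspace_scale)
  have rD: "r \<in> D" unfolding r_def using subD psi_D[OF s] puD by (simp add: subspace_diff)
  have rW: "r \<in> W" unfolding W_iff
  proof
    fix v assume v: "v \<in> V"
    show "inner v r = 0" using rat v by (simp add: r_def P_def inner_diff_right inner_commute)
  qed
  have "inner u r = 0" using rW uV W_iff by blast
  then have ru: "inner r u = 0" by (simp add: inner_commute)
  have pu: "inner (\<psi> s) u = P" by (simp add: P_def p_def)
  have rr: "inner r r = 1 - P^2"
    using psi_norm[OF s] pu inner_uu
    by (simp add: r_def inner_diff_left inner_diff_right inner_commute power2_eq_square)
  have gi: "E1 * inner r r \<le> inner r (H r)" by (rule gap_ineq[OF rD rW])
  have psi_eq: "\<psi> s = r + P *\<^sub>R u" by (simp add: r_def)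
  have Hpsi: "H (\<psi> s) = H r + (P * E0) *\<^sub>R u"
    using H_add[OF rD puD] H_scale[OF uD, of P] V_H[OF uV] psi_eq by simp
  have uHr: "inner u (H r) = 0"
    using H_sym[OF uD rD] V_H[OF uV] ru by (simp add: inner_commute)
  have "En s = inner (r + P *\<^sub>R u) (H r + (P * E0) *\<^sub>R u)" by (simp add: En_def Hpsi psi_eq[symmetric])
  also have "\<dots> = inner r (H r) + P * P * E0"
    using ru uHr inner_uu by (simp add: inner_add_left inner_add_right)
  finally have "En s = inner r (H r) + P * P * E0" .
  then show ?thesis using gi rr by (simp add: P_def[symmetric] algebra_simps power2_eq_square)
qed

end


context flowsetup begin

lemma key:
  assumes tau: "\<tau> \<ge> 0" and pos: "\<forall>s\<in>{0..\<tau>}. p s > 0"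
  shows "(1 / (p \<tau> * p \<tau>) - 1) * exp (4 * (E1 - E0) * \<tau>) \<le> 1 / (p 0 * p 0) - 1"
proof -
  define k where "k = 4 * (E1 - E0)"
  define G where "G s = (1 / (p s * p s) - 1) * exp (k * s)" for s
  have "G 0 \<ge> G \<tau>"
  proof (rule DERIV_nonpos_imp_decreasing_open[OF tau])
    fix x assume x: "0 < x" "x < \<tau>"
    have x0: "0 \<le> x" using x by simp
    have xs: "x \<in> {0..\<tau>}" using x by simp
    have rat: "\<forall>v\<in>V. inner (\<psi> x) v = p x * inner u v" using ratio[OF tau pos _ xs] by blast
    have eb: "(E1 - E0) * (1 - p x ^ 2) \<le> En x - E0" by (rule En_bound[OF x0 rat])
    have "(p has_real_derivative (-2) * (E0 - En x) * p x) (at x within {0<..})"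
      by (rule DERIV_subset[OF deriv_p[OF x0]]) auto
    then have dp: "(p has_real_derivative (-2) * (E0 - En x) * p x) (at x)"
      using at_within_open[of x "{0<..}"] x by simp
    define P where "P = p x"
    have Ppos: "P > 0" using pos xs by (simp add: P_def)
    have Pnz: "P \<noteq> 0" using Ppos by simp
    define Gd where "Gd = exp (k * x) / (P * P) * (k * (1 - P * P) - 4 * (En x - E0))"
    have dG: "(G has_real_derivative Gd) (at x)"
      unfolding G_def[abs_def]
      by (auto intro!: derivative_eq_intros dp simp: Gd_def P_def[symmetric] field_simps k_def Pnz)
    have "k * (1 - P * P) - 4 * (En x - E0) \<le> 0"
      using eb by (simp add: k_def P_def power2_eq_square algebra_simps)
    moreover have "exp (k * x) / (P * P) > 0" using Ppos by simp
    ultimately have "Gd \<le> 0" unfolding Gd_def by (metis less_imp_le mult_nonneg_nonpos)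
    with dG show "\<exists>y. (G has_real_derivative y) (at x) \<and> y \<le> 0" by blast
  next
    have cp: "continuous_on {0..\<tau>} p"
      using continuous_on_subset[OF cont_q[OF uV]] by (auto simp: p_def[abs_def])
    have "\<forall>s\<in>{0..\<tau>}. p s * p s \<noteq> 0" using pos by force
    then show "continuous_on {0..\<tau>} G" unfolding G_def[abs_def]
      by (intro continuous_intros cp) auto
  qed
  then show ?thesis by (simp add: G_def k_def)
qed

end


context flowsetup begin

definition "alpha = norm (\<psi>0 - a0) / norm a0"

lemma p_le1: "s \<ge> 0 \<Longrightarrow> p s \<le> 1"
proof -
  assume s: "s \<ge> 0"
  have "p s \<le> norm (\<psi> s) * norm u" unfolding p_def by (rule norm_cauchy_schwarz)
  then show ?thesis using \<psi>_sphere s norm_u by simp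
qed

lemma alpha2: "alpha * alpha = 1 / (p 0 * p 0) - 1"
proof -
  have orth: "inner a0 (\<psi>0 - a0) = 0" using a0V a0W W_iff by blast
  have "inner \<psi>0 \<psi>0 = inner a0 a0 + inner (\<psi>0 - a0) (\<psi>0 - a0)"
    using orth by (simp add: inner_diff_left inner_diff_right inner_commute)
  moreover have "inner \<psi>0 \<psi>0 = norm \<psi>0 ^ 2" by (simp add: power2_norm_eq_inner)
  ultimately have "1 = norm a0 ^ 2 + norm (\<psi>0 - a0) ^ 2"
    using \<psi>0_unit by (simp add: power2_norm_eq_inner)
  then have e: "norm (\<psi>0 - a0) * norm (\<psi>0 - a0) = 1 - norm a0 * norm a0" by (simp add: power2_eq_square)
  have "alpha * alpha = norm (\<psi>0 - a0) * norm (\<psi>0 - a0) / (norm a0 * norm a0)"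
    by (simp add: alpha_def)
  also have "\<dots> = 1 / (p 0 * p 0) - 1" using a0nz by (simp add: e p0 field_simps)
  finally show ?thesis .
qed

lemma lower:
  assumes s: "s \<ge> 0" and pos: "\<forall>x\<in>{0..s}. p x > 0"
  shows "1 / (1 + alpha * alpha) \<le> p s * p s"
proof -
  have k: "(1 / (p s * p s) - 1) * exp (4 * (E1 - E0) * s) \<le> alpha * alpha"
    using key[OF s pos] alpha2 by simp
  have ps: "0 < p s" "p s \<le> 1" using pos s p_le1 by auto
  have "1 \<le> 1 / (p s * p s)" using ps by (simp add: mult_le_one le_divide_eq)
  then have nn: "0 \<le> 1 / (p s * p s) - 1" by simp
  have "1 \<le> exp (4 * (E1 - E0) * s)" using s gap by simp
  then have "(1 / (p s * p s) - 1) * 1 \<le> (1 / (p s * p s) - 1) * exp (4 * (E1 - E0) * s)"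
    using nn by (intro mult_left_mono) auto
  then have "1 / (p s * p s) \<le> 1 + alpha * alpha" using k by simp
  then have "1 \<le> (1 + alpha * alpha) * (p s * p s)" using ps by (simp add: divide_le_eq)
  moreover have "0 < 1 + alpha * alpha" by (simp add: add_pos_nonneg)
  ultimately show ?thesis by (simp add: divide_le_eq mult.commute)
qed

lemma pos_all:
  assumes t: "t \<ge> 0"
  shows "\<forall>s\<in>{0..t}. p s > 0"
proof (rule ccontr)
  assume neg: "\<not> (\<forall>s\<in>{0..t}. p s > 0)"
  define Z where "Z = {0..t} \<inter> p -` {..0}"
  have Zne: "Z \<noteq> {}" using neg by (auto simp: Z_def not_less)
  have cp: "continuous_on {0..t} p"
    using continuous_on_subset[OF cont_q[OF uV]] by (auto simp: p_def[abs_def])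
  have clZ: "closed Z" unfolding Z_def by (rule continuous_closed_preimage[OF cp]) auto
  have bZ: "bdd_below Z" by (auto simp: Z_def bdd_below_def)
  define \<tau> where "\<tau> = Inf Z"
  have tZ: "\<tau> \<in> Z" unfolding \<tau>_def by (rule closed_contains_Inf[OF Zne bZ clZ])
  then have t0: "0 \<le> \<tau>" "\<tau> \<le> t" "p \<tau> \<le> 0" by (auto simp: Z_def)
  have before: "p s > 0" if "0 \<le> s" "s < \<tau>" for s
  proof (rule ccontr)
    assume "\<not> p s > 0"
    then have "s \<in> Z" using that t0 by (auto simp: Z_def)
    then have "\<tau> \<le> s" unfolding \<tau>_def using bZ by (rule cInf_lower)
    then show False using that by simp
  qed
  have p0pos: "p 0 > 0" using p0 a0nz by simp
  have tpos: "0 < \<tau>" using t0 p0pos by (cases "\<tau> = 0") auto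
  define c where "c = sqrt (1 / (1 + alpha * alpha))"
  have cpos: "c > 0" by (simp add: c_def add_pos_nonneg)
  define Y where "Y = {0..\<tau>} \<inter> p -` {c..}"
  have cpt: "continuous_on {0..\<tau>} p" using continuous_on_subset[OF cp] t0 by auto
  have clY: "closed Y" unfolding Y_def by (rule continuous_closed_preimage[OF cpt]) auto
  have "{0..<\<tau>} \<subseteq> Y"
  proof
    fix s assume s: "s \<in> {0..<\<tau>}"
    have pos: "\<forall>x\<in>{0..s}. p x > 0" using before s by auto
    have l: "1 / (1 + alpha * alpha) \<le> p s * p s" using lower[OF _ pos] s by simp
    have "c \<le> p s" unfolding c_def
      using l before[of s] s real_sqrt_le_mono[OF l] by (simp add: real_sqrt_mult_self)
    then show "s \<in> Y" using s by (simp add: Y_def)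
  qed
  then have "closure {0..<\<tau>} \<subseteq> Y" using clY by (rule closure_minimal)
  then have "\<tau> \<in> Y" using tpos by auto
  then have "c \<le> p \<tau>" by (simp add: Y_def)
  then show False using cpos t0 by simp
qed

lemma final:
  assumes t: "t \<ge> 0"
  shows "norm (u - \<psi> t) \<le> sqrt 2 * alpha * exp (-2 * (E1 - E0) * t)"
proof -
  define P where "P = p t"
  have pos: "\<forall>s\<in>{0..t}. p s > 0" by (rule pos_all[OF t])
  have Pp: "0 < P" "P \<le> 1" using pos t p_le1 by (auto simp: P_def)
  have k: "(1 / (P * P) - 1) * exp (4 * (E1 - E0) * t) \<le> alpha * alpha"
    using key[OF t pos] alpha2 by (simp add: P_def)
  define e where "e = exp (-2 * (E1 - E0) * t)"
  have e2: "exp (4 * (E1 - E0) * t) * (e * e) = 1"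
  proof -
    have "exp (4 * (E1 - E0) * t) * (e * e) = exp (4 * (E1 - E0) * t + (-2 * (E1 - E0) * t) + (-2 * (E1 - E0) * t))"
      by (simp only: e_def exp_add mult.assoc)
    also have "4 * (E1 - E0) * t + (-2 * (E1 - E0) * t) + (-2 * (E1 - E0) * t) = 0" by (simp add: algebra_simps)
    finally show ?thesis by simp
  qed
  have epos: "e > 0" by (simp add: e_def)
  have "1 / (P * P) - 1 \<le> alpha * alpha * (e * e)"
  proof -
    have "(1 / (P * P) - 1) = (1 / (P * P) - 1) * exp (4 * (E1 - E0) * t) * (e * e)"
      using e2 by (simp add: mult.assoc)
    also have "\<dots> \<le> alpha * alpha * (e * e)" using k epos by (intro mult_right_mono) auto
    finally show ?thesis .
  qed
  then have "1 - P * P \<le> P * P * (alpha * alpha * (e * e))" using Pp by (simp add: field_simps)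
  also have "\<dots> \<le> alpha * alpha * (e * e)"
    using Pp by (intro mult_left_le_one_le) (auto intro: mult_le_one)
  finally have a: "1 - P * P \<le> alpha * alpha * (e * e)" .
  have "1 - P \<le> 1 - P * P" using Pp by (simp add: mult_le_cancel_left1)
  with a have b: "2 - 2 * P \<le> 2 * (alpha * alpha * (e * e))" by simp
  have "norm (u - \<psi> t) ^ 2 = inner u u - 2 * inner u (\<psi> t) + inner (\<psi> t) (\<psi> t)"
    by (simp add: power2_norm_eq_inner inner_diff_left inner_diff_right inner_commute)
  also have "\<dots> = 2 - 2 * P" using inner_uu psi_norm[OF t] by (simp add: P_def p_def inner_commute)
  also have "\<dots> \<le> (sqrt 2 * alpha * e) ^ 2"
  proof -
    have "(sqrt 2 * alpha * e) ^ 2 = (sqrt 2) ^ 2 * (alpha ^ 2 * e ^ 2)" by (simp add: power_mult_distrib)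
    also have "\<dots> = 2 * (alpha * alpha * (e * e))" by (simp add: power2_eq_square)
    finally show ?thesis using b by simp
  qed
  finally have "norm (u - \<psi> t) ^ 2 \<le> (sqrt 2 * alpha * e) ^ 2" .
  moreover have "0 \<le> sqrt 2 * alpha * e" using epos by (simp add: alpha_def)
  ultimately show ?thesis unfolding e_def[symmetric] by (rule power2_le_imp_le)
qed

end

theorem mainTheorem2:
  fixes D :: "'a::{real_inner, complete_space} set"
    and H :: "'a \<Rightarrow> 'a"
    and E0 E1 :: real
    and \<psi>0 :: 'a
    and \<psi> :: "real \<Rightarrow> 'a"
  assumes sa: "densely_defined_self_adjoint D H"
    and bdd: "bdd_below (op_spectrum D H)"
    and E0_def: "E0 = Inf (op_spectrum D H)"
    and E0_eig: "\<exists>x\<in>D. x \<noteq> 0 \<and> H x = E0 *\<^sub>R x"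
    and E1_def: "E1 = Inf (op_spectrum D H - {E0})"
    and gap: "E1 > E0"
    and \<psi>0_unit: "norm \<psi>0 = 1"
    and \<psi>0_not_perp: "\<psi>0 \<notin> orthogonal_comp (eigenspace_op D H E0)"
    and \<psi>_sphere: "\<forall>t\<ge>0. norm (\<psi> t) = 1 \<and> \<psi> t \<in> D"
    and \<psi>_flow: "\<forall>t\<ge>0. (\<psi> has_vector_derivative
                   (-2) *\<^sub>R (H (\<psi> t) - energy H (\<psi> t) *\<^sub>R \<psi> t)) (at t within {0..})"
    and \<psi>_init: "\<psi> 0 = \<psi>0"
  shows "\<forall>t\<ge>0.
    (let P0 = orth_proj (eigenspace_op D H E0);
         v0 = (1 / norm (P0 \<psi>0)) *\<^sub>R P0 \<psi>0;
         \<alpha> = norm (\<psi>0 - P0 \<psi>0) / norm (P0 \<psi>0)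
     in norm (v0 - \<psi> t) \<le> sqrt 2 * \<alpha> * exp (-2 * (E1 - E0) * t))"
proof -
  interpret flowsetup D H E0 E1 \<psi>0 \<psi>
    by unfold_locales (use sa bdd E0_def E1_def gap \<psi>0_unit \<psi>0_not_perp \<psi>_sphere \<psi>_flow \<psi>_init in auto)
  show ?thesis
  proof (intro allI impI)
    fix t :: real assume t: "t \<ge> 0"
    show "let P0 = orth_proj (eigenspace_op D H E0);
         v0 = (1 / norm (P0 \<psi>0)) *\<^sub>R P0 \<psi>0;
         \<alpha> = norm (\<psi>0 - P0 \<psi>0) / norm (P0 \<psi>0)
     in norm (v0 - \<psi> t) \<le> sqrt 2 * \<alpha> * exp (-2 * (E1 - E0) * t)"
      using final[OF t] by (simp add: Let_def a0_def u_def alpha_def V_def)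
  qed
qed

end
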